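(* Let $m\ge2$ be such that $m+1$ is a power of $2$, and let $f$ be the two-digit base-$m$ Kaprekar map on $X=\{0,\dots,m^2-1\}$. Then $K(x)=\{0\}$ for every $x\in X$.
   Context: For an integer $m\ge2$, $X=\{0,1,\dots,m^2-1\}$, each element written with exactly two base-$m$ digits (leading zeros allowed); $f(x)=D(x)-A(x)$ where $D(x)$ (resp. $A(x)$) has the digits of $x$ in nonincreasing (resp. nondecreasing) order. The step $S(x)$ is the least $s\ge0$ such that $f^{s+t}(x)=f^s(x)$ for some $t\ge1$; $T(x)$ is the least $t\ge1$ with $f^{S(x)+t}(x)=f^{S(x)}(x)$; the fixed set of $x$ is $K(x)=\{f^{S(x)+i}(x):0\le i<T(x)\}$. *)

theory Defs
  imports Main
begin

definition kapD :: "nat \<Rightarrow> nat \<Rightarrow> nat" where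
  "kapD m x = max (x div m) (x mod m) * m + min (x div m) (x mod m)"

definition kapA :: "nat \<Rightarrow> nat \<Rightarrow> nat" where
  "kapA m x = min (x div m) (x mod m) * m + max (x div m) (x mod m)"

definition kap :: "nat \<Rightarrow> nat \<Rightarrow> nat" where
  "kap m x = kapD m x - kapA m x"

definition kapS :: "nat \<Rightarrow> nat \<Rightarrow> nat" where
  "kapS m x = (LEAST s. \<exists>t\<ge>1. (kap m ^^ (s + t)) x = (kap m ^^ s) x)"

definition kapT :: "nat \<Rightarrow> nat \<Rightarrow> nat" where
  "kapT m x = (LEAST t. t \<ge> 1 \<and> (kap m ^^ (kapS m x + t)) x = (kap m ^^ kapS m x) x)"

definition kapK :: "nat \<Rightarrow> nat \<Rightarrow> nat set" where
  "kapK m x = {(kap m ^^ (kapS m x + i)) x | i. i < kapT m x}"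

end

theory Submission
  imports Defs
begin

lemma kap_gen: "kap m x = (max (x div m) (x mod m) - min (x div m) (x mod m)) * (m - 1)"
proof -
  define p where "p = max (x div m) (x mod m)"
  define q where "q = min (x div m) (x mod m)"
  have pq: "q \<le> p" unfolding p_def q_def by simp
  have "kap m x = (p*m + q) - (q*m + p)" unfolding kap_def kapD_def kapA_def p_def q_def by simp
  also have "\<dots> = (p - q) * (m - 1)"
  proof -
    obtain r where r: "p = q + r" using pq le_Suc_ex by blast
    show ?thesis using r by (cases m) (auto simp: algebra_simps)
  qed
  finally show ?thesis unfolding p_def q_def .
qed

definition g :: "nat \<Rightarrow> nat \<Rightarrow> nat" where
  "g m d = (if d = 0 then 0 else if 2*d \<le> m+1 then m+1-2*d else 2*d-(m+1))"

lemma kap_step: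
  assumes "m \<ge> 2" "d \<le> m - 1"
  shows "kap m (d*(m-1)) = g m d * (m-1)"
proof (cases "d = 0")
  case True thus ?thesis by (simp add: kap_gen g_def)
next
  case False
  have e: "d*(m-1) = (d-1)*m + (m-d)" using False assms
    by (cases d; cases m) (auto simp: algebra_simps)
  have r: "m - d < m" using False assms by simp
  have gen: "\<And>q r. r < m \<Longrightarrow> (q*m + r) div m = q \<and> (q*m + r) mod m = r" by simp
  have dv: "d*(m-1) div m = d - 1" and md: "d*(m-1) mod m = m - d"
    using gen[OF r, of "d-1"] unfolding e[symmetric] by simp_all
  show ?thesis using False assms unfolding kap_gen dv md g_def by (auto simp: max_def min_def)
qed

lemma kap_iter:
  assumes "m \<ge> 2" "d \<le> m - 1"
  shows "(kap m ^^ n) (d*(m-1)) = (g m ^^ n) d * (m-1)"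
  using assms(2)
proof (induction n arbitrary: d)
  case 0 thus ?case by simp
next
  case (Suc n)
  have "g m d \<le> m - 1" using Suc.prems assms(1) unfolding g_def by auto
  thus ?case using Suc kap_step[OF assms(1) Suc.prems] by (simp del: funpow.simps add: funpow_Suc_right)
qed

lemma g_iter:
  assumes "m + 1 = 2^k" "k \<ge> 1"
  shows "d < 2^k \<Longrightarrow> 2^(k-n) dvd d \<Longrightarrow> (g m ^^ n) d = 0"
proof (induction n arbitrary: d)
  case 0
  then show ?case by (metis diff_zero funpow_0 nat_dvd_not_less neq0_conv)
next
  case (Suc n)
  have lt: "g m d < 2^k" using Suc.prems assms unfolding g_def by auto
  have dv: "2^(k-n) dvd g m d"
  proof (cases "d = 0")
    case True thus ?thesis by (simp add: g_def)
  next
    case False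
    have h1: "2^(k - Suc n) dvd d" using Suc.prems by simp
    have h2: "2^(k - Suc n) dvd (2::nat)^(k-1)" by (rule le_imp_power_dvd) simp
    have km: "m + 1 = 2 * 2^(k-1)" using assms by (cases k) auto
    have "2^(k - Suc n) dvd (if d \<le> 2^(k-1) then 2^(k-1) - d else d - 2^(k-1))"
      using h1 h2 by (auto intro: dvd_diff_nat)
    moreover have "g m d = 2 * (if d \<le> 2^(k-1) then 2^(k-1) - d else d - 2^(k-1))"
      unfolding g_def using False km by auto
    ultimately have "2 * 2^(k - Suc n) dvd g m d" by (simp add: mult_dvd_mono)
    moreover have "(2::nat) ^ (k-n) dvd 2 * 2^(k - Suc n)"
    proof (cases "n < k")
      case True
      hence "k - n = Suc (k - Suc n)" by simp
      thus ?thesis by simp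
    next
      case False
      hence "k - n = 0" by simp
      thus ?thesis by simp
    qed
    ultimately show ?thesis by (meson dvd_trans)
  qed
  show ?case using Suc.IH[OF lt dv] by (simp del: funpow.simps add: funpow_Suc_right)
qed

lemma reach0:
  assumes "m \<ge> 2" "\<exists>k. m + 1 = 2 ^ k" "x < m ^ 2"
  shows "\<exists>N. (kap m ^^ N) x = 0"
proof -
  obtain k where k: "m + 1 = 2^k" using assms by blast
  have k1: "k \<ge> 1" using k assms(1) by (cases k) auto
  define d where "d = max (x div m) (x mod m) - min (x div m) (x mod m)"
  have xd: "x div m < m" using assms(3) by (simp add: power2_eq_square less_mult_imp_div_less)
  have xm: "x mod m < m" using assms(1) by simp
  have "max (x div m) (x mod m) \<le> m - 1" using xd xm by linarith
  hence dm: "d \<le> m - 1" unfolding d_def by linarith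
  have "(kap m ^^ Suc k) x = (kap m ^^ k) (d*(m-1))"
    by (simp del: funpow.simps add: funpow_Suc_right kap_gen d_def)
  also have "\<dots> = (g m ^^ k) d * (m-1)" by (rule kap_iter[OF assms(1) dm])
  also have "(g m ^^ k) d = 0" using g_iter[OF k k1] dm k by simp
  finally have "(kap m ^^ Suc k) x = 0" by simp
  thus ?thesis by blast
qed

lemma kap0: "kap m 0 = 0" by (simp add: kap_gen)

lemma iter0: "(kap m ^^ n) 0 = 0"
  by (induction n) (auto simp: kap0)

lemma after: "(kap m ^^ N) x = 0 \<Longrightarrow> N \<le> n \<Longrightarrow> (kap m ^^ n) x = 0"
  by (metis funpow_add iter0 le_add_diff_inverse2 comp_apply)

theorem corollary3p3p2:
  fixes m x :: nat
  assumes "m \<ge> 2" and "\<exists>k. m + 1 = 2 ^ k" and "x < m ^ 2"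
  shows "kapK m x = {0}"
proof -
  obtain N where N: "(kap m ^^ N) x = 0" using reach0[OF assms] by blast
  let ?P = "\<lambda>s. \<exists>t\<ge>1. (kap m ^^ (s + t)) x = (kap m ^^ s) x"
  have PN: "?P N" using after[OF N] by (intro exI[of _ 1]) (auto simp: kap0)
  hence "?P (kapS m x)" unfolding kapS_def by (rule LeastI)
  then obtain t where t: "t \<ge> 1" "(kap m ^^ (kapS m x + t)) x = (kap m ^^ kapS m x) x" by blast
  define S where "S = kapS m x"
  have per: "(kap m ^^ (S + j*t)) x = (kap m ^^ S) x" for j
  proof (induction j)
    case 0 thus ?case by simp
  next
    case (Suc j)
    have "(kap m ^^ (S + Suc j * t)) x = (kap m ^^ (t + (S + j*t))) x"
      by (simp add: algebra_simps)
    also have "\<dots> = (kap m ^^ t) ((kap m ^^ (S + j*t)) x)"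
      by (simp only: funpow_add o_def)
    also have "\<dots> = (kap m ^^ t) ((kap m ^^ S) x)" using Suc by simp
    also have "\<dots> = (kap m ^^ (t + S)) x" by (simp only: funpow_add o_def)
    also have "\<dots> = (kap m ^^ S) x" using t unfolding S_def by (simp add: add.commute)
    finally show ?case .
  qed
  have "N * 1 \<le> N*t" using t(1) by (rule mult_le_mono2)
  hence "N \<le> S + N*t" by linarith
  hence z: "(kap m ^^ S) x = 0" using per[of N] after[OF N] by simp
  have T: "kapT m x = 1"
    unfolding kapT_def S_def[symmetric]
    by (rule Least_equality) (auto simp: z kap0)
  show ?thesis unfolding kapK_def T S_def[symmetric] using z by auto
qed

end
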